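(* For a mixed graph $M_G$ the following are equivalent: (a) $\rho(M_G)<\sqrt2$; (b) $\rho(M_G)\le 1$; (c) every connected component of $M_G$ is an undirected edge, an arc, or an isolated vertex.
   Context: A mixed graph $M_G$ is obtained from a finite simple graph $G$ by orienting the edges of some subset of $E(G)$; its components are those of $G$ with the inherited orientations. With $\omega=\frac{1+\mathbf{i}\sqrt3}{2}$, $N(M_G)$ has $(u,v)$-entry $\omega$ if $\overrightarrow{uv}$ is an arc, $\bar\omega$ if $\overrightarrow{vu}$ is an arc, $1$ for an undirected edge, $0$ otherwise. The spectral radius $\rho(M_G)$ is the maximum absolute value of an eigenvalue of $N(M_G)$. *)

theory Defs
  imports "Jordan_Normal_Form.Spectral_Radius"
begin

text \<open>A mixed graph on vertex set {0..<n}: E is the (symmetric, irreflexive) edge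
relation of the underlying simple graph G; D u v means that the edge uv is oriented
as the arc from u to v.\<close>

definition mixed_graph :: "nat \<Rightarrow> (nat \<Rightarrow> nat \<Rightarrow> bool) \<Rightarrow> (nat \<Rightarrow> nat \<Rightarrow> bool) \<Rightarrow> bool" where
  "mixed_graph n E D \<longleftrightarrow>
     (\<forall>u v. E u v \<longrightarrow> u < n \<and> v < n) \<and>
     (\<forall>u v. E u v \<longrightarrow> E v u) \<and>
     (\<forall>u. \<not> E u u) \<and>
     (\<forall>u v. D u v \<longrightarrow> E u v) \<and>
     (\<forall>u v. \<not> (D u v \<and> D v u))"

definition omega :: complex where
  "omega = Complex (1/2) (sqrt 3 / 2)"

definition mixed_matrix :: "nat \<Rightarrow> (nat \<Rightarrow> nat \<Rightarrow> bool) \<Rightarrow> (nat \<Rightarrow> nat \<Rightarrow> bool) \<Rightarrow> complex mat" where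
  "mixed_matrix n E D = mat n n (\<lambda>(u, v).
     if D u v then omega
     else if D v u then cnj omega
     else if E u v then 1 else 0)"

definition undirected_edge :: "(nat \<Rightarrow> nat \<Rightarrow> bool) \<Rightarrow> (nat \<Rightarrow> nat \<Rightarrow> bool) \<Rightarrow> nat \<Rightarrow> nat \<Rightarrow> bool" where
  "undirected_edge E D u v \<longleftrightarrow> E u v \<and> \<not> D u v \<and> \<not> D v u"

definition component :: "nat \<Rightarrow> (nat \<Rightarrow> nat \<Rightarrow> bool) \<Rightarrow> nat \<Rightarrow> nat set" where
  "component n E v = {u. u < n \<and> E\<^sup>*\<^sup>* v u}"

definition components :: "nat \<Rightarrow> (nat \<Rightarrow> nat \<Rightarrow> bool) \<Rightarrow> nat set set" where
  "components n E = component n E ` {0..<n}"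

end

theory Submission imports Defs "HOL-Analysis.L2_Norm" begin

lemma norm_omega: "norm omega = 1"
  by (simp add: omega_def complex_norm power_divide)

lemma mm_carrier: "mixed_matrix n E D \<in> carrier_mat n n"
  by (simp add: mixed_matrix_def)

lemma mm_entry: "i < n \<Longrightarrow> j < n \<Longrightarrow> mixed_matrix n E D $$ (i,j) =
   (if D i j then omega else if D j i then cnj omega else if E i j then 1 else 0)"
  by (simp add: mixed_matrix_def)

lemma mm_norm: assumes "mixed_graph n E D" "i < n" "j < n"
  shows "norm (mixed_matrix n E D $$ (i,j)) = (if E i j then 1 else 0)"
  using assms unfolding mixed_graph_def by (auto simp: mm_entry norm_omega)

lemma mm_herm: assumes "mixed_graph n E D" "i < n" "j < n"
  shows "cnj (mixed_matrix n E D $$ (j,i)) = mixed_matrix n E D $$ (i,j)"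
  using assms unfolding mixed_graph_def by (auto simp: mm_entry)

lemma pow_step: assumes "A \<in> carrier_mat n n" "i < n" "j < n"
  shows "(A ^\<^sub>m Suc k) $$ (i,j) = (\<Sum>l<n. (A ^\<^sub>m k) $$ (i,l) * A $$ (l,j))"
  using assms by (auto simp: scalar_prod_def lessThan_atLeast0 intro!: sum.cong)

lemma pow_zero_entry: assumes "A \<in> carrier_mat n n" "i < n" "j < n"
  shows "(A ^\<^sub>m 0) $$ (i,j) = (if i = j then 1 else 0)"
  using assms by auto

lemma pow_smult_entry: fixes A :: "complex mat" assumes "A \<in> carrier_mat n n" "i < n" "j < n"
  shows "((a \<cdot>\<^sub>m A) ^\<^sub>m k) $$ (i,j) = a ^ k * (A ^\<^sub>m k) $$ (i,j)"
  using assms(3)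
proof (induction k arbitrary: j)
  case 0
  then show ?case using assms by auto
next
  case (Suc k)
  have B: "a \<cdot>\<^sub>m A \<in> carrier_mat n n" using assms by auto
  have "((a \<cdot>\<^sub>m A) ^\<^sub>m Suc k) $$ (i,j) = (\<Sum>l<n. ((a \<cdot>\<^sub>m A) ^\<^sub>m k) $$ (i,l) * (a \<cdot>\<^sub>m A) $$ (l,j))"
    by (rule pow_step[OF B assms(2) Suc.prems])
  also have "\<dots> = (\<Sum>l<n. a ^ Suc k * ((A ^\<^sub>m k) $$ (i,l) * A $$ (l,j)))"
    using Suc.IH Suc.prems assms by (intro sum.cong) (auto simp: algebra_simps)
  also have "\<dots> = a ^ Suc k * (A ^\<^sub>m Suc k) $$ (i,j)"
    using pow_step[OF assms(1,2) Suc.prems] by (simp add: sum_distrib_left)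
  finally show ?case .
qed

lemma mult_vec_entry: assumes "A \<in> carrier_mat n n" "x \<in> carrier_vec n" "i < n"
  shows "(A *\<^sub>v x) $ i = (\<Sum>j<n. A $$ (i,j) * x $ j)"
  using assms by (auto simp: scalar_prod_def lessThan_atLeast0 intro!: sum.cong)

definition deg_le1 :: "nat \<Rightarrow> (nat \<Rightarrow> nat \<Rightarrow> bool) \<Rightarrow> bool" where
  "deg_le1 n E \<longleftrightarrow> (\<forall>i<n. \<forall>w1 w2. E i w1 \<longrightarrow> E i w2 \<longrightarrow> w1 = w2)"

lemma upper: assumes G: "mixed_graph n E D" and n: "n > 0" and P: "deg_le1 n E"
  shows "spectral_radius (mixed_matrix n E D) \<le> 1"
proof -
  let ?N = "mixed_matrix n E D"
  have N: "?N \<in> carrier_mat n n" by (rule mm_carrier)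
  obtain mu where mu: "mu \<in> spectrum ?N" "spectral_radius ?N = norm mu"
    using spectral_radius_mem_max(1)[OF N n] by auto
  then obtain x where ev: "eigenvector ?N x mu"
    unfolding spectrum_def eigenvalue_def by auto
  hence x: "x \<in> carrier_vec n" "x \<noteq> 0\<^sub>v n" "?N *\<^sub>v x = mu \<cdot>\<^sub>v x"
    unfolding eigenvector_def using N by auto
  define m where "m = Max ((\<lambda>j. norm (x $ j)) ` {..<n})"
  have fin: "finite ((\<lambda>j. norm (x $ j)) ` {..<n})" by auto
  have ne: "(\<lambda>j. norm (x $ j)) ` {..<n} \<noteq> {}" using n by auto
  obtain i where i: "i < n" "norm (x $ i) = m"
    using Max_in[OF fin ne] unfolding m_def by auto
  have le: "norm (x $ j) \<le> m" if "j < n" for j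
    unfolding m_def using that fin by (intro Max_ge) auto
  have mpos: "m > 0"
  proof (rule ccontr)
    assume "\<not> m > 0"
    hence "x $ j = 0" if "j < n" for j using le[OF that] by (smt (verit) norm_ge_zero norm_le_zero_iff)
    hence "x = 0\<^sub>v n" using x(1) by (intro eq_vecI) auto
    with x(2) show False by simp
  qed
  have "mu * x $ i = (?N *\<^sub>v x) $ i" using x(3) x(1) i by simp
  also have "\<dots> = (\<Sum>j<n. ?N $$ (i,j) * x $ j)" by (rule mult_vec_entry[OF N x(1) i(1)])
  finally have eq: "mu * x $ i = (\<Sum>j<n. ?N $$ (i,j) * x $ j)" .
  have "norm mu * m = norm (\<Sum>j<n. ?N $$ (i,j) * x $ j)" by (metis eq i(2) norm_mult)
  also have "\<dots> \<le> (\<Sum>j<n. norm (?N $$ (i,j)) * norm (x $ j))"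
    by (rule order.trans[OF norm_sum]) (simp add: norm_mult)
  also have "\<dots> \<le> (\<Sum>j<n. (if E i j then m else 0))"
    using le i G by (intro sum_mono) (auto simp: mm_norm)
  also have "\<dots> = (\<Sum>j\<in>{j\<in>{..<n}. E i j}. m)"
    by (subst sum.inter_filter[symmetric]) auto
  also have "\<dots> = real (card {j\<in>{..<n}. E i j}) * m" by simp
  also have "\<dots> \<le> 1 * m"
  proof -
    have "card {j\<in>{..<n}. E i j} \<le> 1"
      using P i(1) unfolding deg_le1_def One_nat_def by (subst card_le_Suc0_iff_eq) auto
    thus ?thesis using mpos by (intro mult_right_mono) auto
  qed
  finally have "norm mu \<le> 1" using mpos by simp
  thus ?thesis using mu by simp
qed

lemma scaled_radius: assumes n: "n > 0" and N: "N \<in> carrier_mat n n" and c: "c > 0"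
  and lt: "spectral_radius N < c"
  shows "spectral_radius (complex_of_real (1/c) \<cdot>\<^sub>m N) < 1"
proof -
  let ?B = "complex_of_real (1/c) \<cdot>\<^sub>m N"
  have B: "?B \<in> carrier_mat n n" using N by auto
  obtain mu where mu: "mu \<in> spectrum ?B" "spectral_radius ?B = norm mu"
    using spectral_radius_mem_max(1)[OF B n] by auto
  then obtain x where ev: "eigenvector ?B x mu"
    unfolding spectrum_def eigenvalue_def by auto
  hence x: "x \<in> carrier_vec n" "x \<noteq> 0\<^sub>v n" "?B *\<^sub>v x = mu \<cdot>\<^sub>v x"
    unfolding eigenvector_def using B by auto
  have "N *\<^sub>v x = (complex_of_real c * mu) \<cdot>\<^sub>v x"
  proof (rule eq_vecI)
    fix i assume "i < dim_vec ((complex_of_real c * mu) \<cdot>\<^sub>v x)"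
    hence i: "i < n" using x by auto
    have "mu * x $ i = (?B *\<^sub>v x) $ i" using x i by simp
    also have "\<dots> = (\<Sum>j<n. ?B $$ (i,j) * x $ j)" by (rule mult_vec_entry[OF B x(1) i])
    also have "\<dots> = complex_of_real (1/c) * (\<Sum>j<n. N $$ (i,j) * x $ j)"
      using N i by (auto simp: sum_distrib_left intro!: sum.cong)
    also have "(\<Sum>j<n. N $$ (i,j) * x $ j) = (N *\<^sub>v x) $ i" by (rule mult_vec_entry[OF N x(1) i, symmetric])
    finally have "mu * x $ i = complex_of_real (1/c) * (N *\<^sub>v x) $ i" .
    hence "complex_of_real c * (mu * x $ i) = (N *\<^sub>v x) $ i" using c
      by (simp add: field_simps of_real_def)
    thus "(N *\<^sub>v x) $ i = ((complex_of_real c * mu) \<cdot>\<^sub>v x) $ i" using i x by (simp add: mult.assoc)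
  qed (use N x in auto)
  hence "eigenvector N x (complex_of_real c * mu)" using x N unfolding eigenvector_def by auto
  hence "norm (complex_of_real c * mu) \<in> norm ` spectrum N" unfolding spectrum_def eigenvalue_def by auto
  from spectral_radius_mem_max(2)[OF N n this] lt c have h: "c * norm mu \<le> spectral_radius N"
    by (simp add: norm_mult)
  have "norm mu < 1"
  proof (rule ccontr)
    assume "\<not> norm mu < 1"
    hence "c * 1 \<le> c * norm mu" using c by (intro mult_left_mono) auto
    thus False using h lt by linarith
  qed
  thus ?thesis using mu by simp
qed

lemma lower: assumes G: "mixed_graph n E D" and n: "n > 0"
  and lt: "spectral_radius (mixed_matrix n E D) < sqrt 2"
  shows "deg_le1 n E"
proof (rule ccontr)
  let ?N = "mixed_matrix n E D"
  have N: "?N \<in> carrier_mat n n" by (rule mm_carrier)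
  assume "\<not> deg_le1 n E"
  then obtain i w1 w2 where i: "i < n" and w: "E i w1" "E i w2" "w1 \<noteq> w2"
    unfolding deg_le1_def by auto
  have wn: "w1 < n" "w2 < n" using G w unfolding mixed_graph_def by auto
  define r where "r k j = (?N ^\<^sub>m k) $$ (i,j)" for k j
  define f where "f k = (\<Sum>j<n. (norm (r k j))^2)" for k
  have rstep: "r (Suc k) j = (\<Sum>l<n. r k l * ?N $$ (l,j))" if "j < n" for k j
    unfolding r_def by (rule pow_step[OF N i that])
  have r0: "r 0 j = (if j = i then 1 else 0)" if "j < n" for j
    unfolding r_def using N i that by auto
  have r1: "r 1 j = ?N $$ (i,j)" if "j < n" for j
  proof -
    have "r 1 j = (\<Sum>l<n. (if l = i then ?N $$ (l,j) else 0))"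
      unfolding One_nat_def rstep[OF that] by (intro sum.cong) (auto simp: r0)
    also have "\<dots> = ?N $$ (i,j)" using i by simp
    finally show ?thesis .
  qed
  have f0: "f 0 = 1"
  proof -
    have "f 0 = (\<Sum>j<n. (if j = i then 1 else 0))"
      unfolding f_def by (intro sum.cong) (auto simp: r0)
    also have "\<dots> = 1" using i by simp
    finally show ?thesis .
  qed
  have f1: "f 1 \<ge> 2"
  proof -
    have "f 1 = (\<Sum>j<n. (if E i j then 1 else 0))"
      unfolding f_def
    proof (intro sum.cong refl)
      fix j assume "j \<in> {..<n}"
      hence "norm (r 1 j) = (if E i j then 1 else 0)" using r1 mm_norm[OF G i] by simp
      thus "(norm (r 1 j))^2 = (if E i j then 1 else 0)" by simp
    qed
    also have "\<dots> = (\<Sum>j\<in>{j\<in>{..<n}. E i j}. 1)"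
      by (subst sum.inter_filter[symmetric]) auto
    also have "\<dots> = real (card {j\<in>{..<n}. E i j})" by simp
    finally have eq: "f 1 = real (card {j\<in>{..<n}. E i j})" .
    have "{w1, w2} \<subseteq> {j\<in>{..<n}. E i j}" using w wn by auto
    hence "card {w1, w2} \<le> card {j\<in>{..<n}. E i j}" by (intro card_mono) auto
    thus ?thesis using eq w(3) by simp
  qed
  have fnn: "f k \<ge> 0" for k unfolding f_def by (intro sum_nonneg) auto
  have key: "complex_of_real (f (Suc k)) = (\<Sum>l<n. r k l * cnj (r (Suc (Suc k)) l))" for k
  proof -
    have "complex_of_real (f (Suc k)) = (\<Sum>j<n. r (Suc k) j * cnj (r (Suc k) j))"
      unfolding f_def of_real_sum by (intro sum.cong refl) (simp only: complex_norm_square)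
    also have "\<dots> = (\<Sum>j<n. \<Sum>l<n. r k l * (?N $$ (l,j) * cnj (r (Suc k) j)))"
      by (intro sum.cong) (auto simp: rstep sum_distrib_right mult.assoc)
    also have "\<dots> = (\<Sum>l<n. \<Sum>j<n. r k l * (?N $$ (l,j) * cnj (r (Suc k) j)))"
      by (rule sum.swap)
    also have "\<dots> = (\<Sum>l<n. r k l * cnj (\<Sum>j<n. r (Suc k) j * ?N $$ (j,l)))"
    proof (intro sum.cong refl)
      fix l assume l: "l \<in> {..<n}"
      have "(\<Sum>j<n. r k l * (?N $$ (l,j) * cnj (r (Suc k) j)))
          = r k l * (\<Sum>j<n. cnj (r (Suc k) j * ?N $$ (j,l)))"
        using l G by (auto simp: sum_distrib_left mm_herm intro!: sum.cong)
      thus "(\<Sum>j<n. r k l * (?N $$ (l,j) * cnj (r (Suc k) j)))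
          = r k l * cnj (\<Sum>j<n. r (Suc k) j * ?N $$ (j,l))" by simp
    qed
    also have "\<dots> = (\<Sum>l<n. r k l * cnj (r (Suc (Suc k)) l))"
      by (intro sum.cong) (auto simp: rstep)
    finally show ?thesis .
  qed
  have cs: "(f (Suc k))^2 \<le> f k * f (Suc (Suc k))" for k
  proof -
    have "f (Suc k) = norm (complex_of_real (f (Suc k)))" using fnn by simp
    also have "\<dots> \<le> (\<Sum>l<n. norm (r k l) * norm (r (Suc (Suc k)) l))"
      unfolding key by (rule order.trans[OF norm_sum]) (simp add: norm_mult)
    also have "\<dots> \<le> L2_set (\<lambda>l. norm (r k l)) {..<n} * L2_set (\<lambda>l. norm (r (Suc (Suc k)) l)) {..<n}"
      using L2_set_mult_ineq[of "\<lambda>l. norm (r k l)" "\<lambda>l. norm (r (Suc (Suc k)) l)" "{..<n}"] by simp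
    also have "\<dots> = sqrt (f k) * sqrt (f (Suc (Suc k)))"
      unfolding L2_set_def f_def by simp
    finally have "f (Suc k) \<le> sqrt (f k * f (Suc (Suc k)))" by (simp add: real_sqrt_mult)
    hence "(f (Suc k))^2 \<le> (sqrt (f k * f (Suc (Suc k))))^2"
      using fnn by (intro power_mono) auto
    thus ?thesis using fnn by simp
  qed
  have grow: "f k > 0 \<and> 2 * f k \<le> f (Suc k)" for k
  proof (induction k)
    case 0 then show ?case using f0 f1 by simp
  next
    case (Suc k)
    hence pos: "f (Suc k) > 0" by linarith
    have "f (Suc k) * (2 * f k) \<le> f (Suc k) * f (Suc k)"
      using Suc pos by (intro mult_left_mono) auto
    also have "\<dots> \<le> f k * f (Suc (Suc k))" using cs[of k] by (simp add: power2_eq_square)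
    finally have "f k * (2 * f (Suc k)) \<le> f k * f (Suc (Suc k))" by (simp add: algebra_simps)
    hence "2 * f (Suc k) \<le> f (Suc (Suc k))" using Suc by (simp add: mult_le_cancel_left_pos)
    with pos show ?case by simp
  qed
  have fge: "f k \<ge> 2 ^ k" for k
  proof (induction k)
    case 0 then show ?case using f0 by simp
  next
    case (Suc k) then show ?case using grow[of k] by simp
  qed
  define c where "c = (spectral_radius ?N + sqrt 2) / 2"
  have rho0: "spectral_radius ?N \<ge> 0"
    using spectral_radius_mem_max(1)[OF N n] by auto
  have c: "c > 0" "c < sqrt 2" "spectral_radius ?N < c" using rho0 lt unfolding c_def by auto
  let ?B = "complex_of_real (1/c) \<cdot>\<^sub>m ?N"
  have "spectral_radius ?B < 1" by (rule scaled_radius[OF n N c(1) c(3)])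
  from spectral_radius_jnf_norm_bound_less_1_upper_triangular[OF _ this] N
  obtain C where C: "\<And>k. norm_bound (?B ^\<^sub>m k) C" by fastforce
  have rb: "norm (r k j) \<le> C * c ^ k" if "j < n" for k j
  proof -
    have "(?B ^\<^sub>m k) $$ (i,j) = complex_of_real (1/c) ^ k * r k j"
      unfolding r_def by (rule pow_smult_entry[OF N i that])
    moreover have "norm ((?B ^\<^sub>m k) $$ (i,j)) \<le> C"
      using C[of k] N i that unfolding norm_bound_def by auto
    moreover have "norm (1 / complex_of_real c) = 1/c" using c by (simp add: norm_divide)
    ultimately have "(1/c) ^ k * norm (r k j) \<le> C" using c
      by (simp add: norm_mult norm_power)
    hence "c ^ k * ((1/c) ^ k * norm (r k j)) \<le> c ^ k * C" using c by (intro mult_left_mono) auto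
    thus ?thesis using c by (simp add: power_one_over algebra_simps)
  qed
  have fb: "f k \<le> real n * (C^2 * (c^2) ^ k)" for k
  proof -
    have "f k \<le> (\<Sum>j<n. C^2 * (c^2)^k)"
      unfolding f_def
    proof (intro sum_mono)
      fix j assume "j \<in> {..<n}"
      hence "(norm (r k j))^2 \<le> (C * c^k)^2" using rb by (intro power_mono) auto
      thus "(norm (r k j))^2 \<le> C^2 * (c^2)^k" by (simp add: power_mult_distrib power_mult[symmetric] mult.commute)
    qed
    thus ?thesis by simp
  qed
  define q where "q = 2 / c^2"
  have "c^2 < (sqrt 2)^2" using c by (intro power_strict_mono) auto
  hence c2: "c^2 > 0" "c^2 < 2" using c by auto
  have q1: "q > 1" unfolding q_def using c2 by simp
  obtain k where k: "real n * C^2 < q ^ k" using real_arch_pow[OF q1] by blast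
  have "2 ^ k \<le> real n * (C^2 * (c^2) ^ k)" using fge[of k] fb[of k] by linarith
  hence "2 ^ k / (c^2)^k \<le> real n * C^2" using c2 by (simp add: field_simps)
  hence "q ^ k \<le> real n * C^2" unfolding q_def by (simp add: power_divide)
  with k show False by linarith
qed

lemma graph_char: assumes G: "mixed_graph n E D"
  shows "deg_le1 n E \<longleftrightarrow> (\<forall>C \<in> components n E.
                   (\<exists>u v. C = {u, v} \<and> undirected_edge E D u v)
                 \<or> (\<exists>u v. C = {u, v} \<and> D u v)
                 \<or> (\<exists>u. C = {u}))"
proof
  assume P: "deg_le1 n E"
  show "\<forall>C \<in> components n E. (\<exists>u v. C = {u, v} \<and> undirected_edge E D u v)
                 \<or> (\<exists>u v. C = {u, v} \<and> D u v) \<or> (\<exists>u. C = {u})"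
  proof
    fix C assume "C \<in> components n E"
    then obtain v0 where v0: "v0 < n" and C: "C = component n E v0"
      unfolding components_def by auto
    show "(\<exists>u v. C = {u, v} \<and> undirected_edge E D u v)
                 \<or> (\<exists>u v. C = {u, v} \<and> D u v) \<or> (\<exists>u. C = {u})"
    proof (cases "\<exists>w. E v0 w")
      case False
      have "E\<^sup>*\<^sup>* v0 u \<Longrightarrow> u = v0" for u
        by (induction rule: rtranclp_induct) (use False in auto)
      hence "C = {v0}" unfolding C component_def using v0 by auto
      thus ?thesis by blast
    next
      case True
      then obtain w where w: "E v0 w" by auto
      have wn: "w < n" and wv: "E w v0" using G w unfolding mixed_graph_def by auto
      have "E\<^sup>*\<^sup>* v0 u \<Longrightarrow> u = v0 \<or> u = w" for u
      proof (induction rule: rtranclp_induct)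
        case (step y z)
        have P': "\<And>a b c. a < n \<Longrightarrow> E a b \<Longrightarrow> E a c \<Longrightarrow> b = c"
          using P unfolding deg_le1_def by blast
        from step(3) show ?case
        proof
          assume "y = v0" thus ?case using P'[OF v0 w] step(2) by simp
        next
          assume "y = w" thus ?case using P'[OF wn wv] step(2) by simp
        qed
      qed simp
      moreover have "E\<^sup>*\<^sup>* v0 w" using w by auto
      ultimately have Cw: "C = {v0, w}" unfolding C component_def using v0 wn by auto
      show ?thesis
      proof (cases "D v0 w \<or> D w v0")
        case True
        thus ?thesis
        proof
          assume "D v0 w" thus ?thesis using Cw by blast
        next
          assume "D w v0"
          moreover have "C = {w, v0}" using Cw by auto
          ultimately show ?thesis by blast
        qed
      next
        case False
        thus ?thesis using Cw w unfolding undirected_edge_def by blast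
      qed
    qed
  qed
next
  assume H: "\<forall>C \<in> components n E. (\<exists>u v. C = {u, v} \<and> undirected_edge E D u v)
                 \<or> (\<exists>u v. C = {u, v} \<and> D u v) \<or> (\<exists>u. C = {u})"
  show "deg_le1 n E" unfolding deg_le1_def
  proof (intro allI impI)
    fix i w1 w2 assume i: "i < n" and w: "E i w1" "E i w2"
    show "w1 = w2"
    proof (rule ccontr)
      assume ne: "w1 \<noteq> w2"
      have G1: "\<And>a b. E a b \<Longrightarrow> a < n \<and> b < n" and G2: "\<And>a. \<not> E a a"
        using G unfolding mixed_graph_def by blast+
      have wn: "w1 < n" "w2 < n" using G1 w by auto
      have irr: "i \<noteq> w1" "i \<noteq> w2" using G2 w by auto
      let ?C = "component n E i"
      have inC: "i \<in> ?C" "w1 \<in> ?C" "w2 \<in> ?C"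
        unfolding component_def using i wn w by auto
      have "?C \<in> components n E" unfolding components_def using i by auto
      with H have d: "(\<exists>u v. ?C = {u, v} \<and> undirected_edge E D u v)
                 \<or> (\<exists>u v. ?C = {u, v} \<and> D u v) \<or> (\<exists>u. ?C = {u})" by (rule bspec)
      obtain u v where uv: "?C \<subseteq> {u, v}"
      proof -
        from d show thesis
        proof (elim disjE exE conjE)
          fix a b assume "?C = {a, b}" thus thesis using that[of a b] by simp
        next
          fix a b assume "?C = {a, b}" thus thesis using that[of a b] by simp
        next
          fix a assume "?C = {a}" thus thesis using that[of a a] by simp
        qed
      qed
      have "i = u \<or> i = v" "w1 = u \<or> w1 = v" "w2 = u \<or> w2 = v" using inC uv by auto
      thus False using ne irr by auto
    qed
  qed
qed

theorem theorem6p4: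
  fixes n :: nat and E D :: "nat \<Rightarrow> nat \<Rightarrow> bool"
  assumes "mixed_graph n E D" and "n > 0"
  shows "(spectral_radius (mixed_matrix n E D) < sqrt 2
            \<longleftrightarrow> spectral_radius (mixed_matrix n E D) \<le> 1)
       \<and> (spectral_radius (mixed_matrix n E D) \<le> 1
            \<longleftrightarrow> (\<forall>C \<in> components n E.
                   (\<exists>u v. C = {u, v} \<and> undirected_edge E D u v)
                 \<or> (\<exists>u v. C = {u, v} \<and> D u v)
                 \<or> (\<exists>u. C = {u})))"
proof -
  have s: "(1::real) < sqrt 2" by simp
  have a: "spectral_radius (mixed_matrix n E D) < sqrt 2 \<Longrightarrow> deg_le1 n E"
    by (rule lower[OF assms])
  have b: "deg_le1 n E \<Longrightarrow> spectral_radius (mixed_matrix n E D) \<le> 1"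
    by (rule upper[OF assms])
  have c1: "spectral_radius (mixed_matrix n E D) < sqrt 2
            \<longleftrightarrow> spectral_radius (mixed_matrix n E D) \<le> 1"
  proof
    assume "spectral_radius (mixed_matrix n E D) < sqrt 2"
    thus "spectral_radius (mixed_matrix n E D) \<le> 1" using a b by blast
  next
    assume "spectral_radius (mixed_matrix n E D) \<le> 1"
    thus "spectral_radius (mixed_matrix n E D) < sqrt 2" using s by linarith
  qed
  have c2: "spectral_radius (mixed_matrix n E D) \<le> 1 \<longleftrightarrow> deg_le1 n E"
    using c1 a b by blast
  show ?thesis
    by (intro conjI c1, unfold c2, rule graph_char[OF assms(1)])
qed

end
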